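(* Let $(r_n)_{n\ge0},(b_n)_{n\ge0},(d_n)_{n\ge0}$ be arbitrary sequences of real numbers and $H_n=i^n\begin{pmatrix}r_n&ib_n\\-ib_n&d_n\end{pmatrix}$. Then there exist real signed Borel measures $\rho_{11},\rho_{12},\rho_{22}$ on $\mathbb R$, each a difference of two positive Borel measures having finite moments of all orders, such that the matrix measure $d\bar\rho=\begin{pmatrix}d\rho_{11}&i\,d\rho_{12}\\-i\,d\rho_{12}&d\rho_{22}\end{pmatrix}$ satisfies $\int_{\mathbb R}(i\mu)^n\,d\bar\rho(\mu)=H_n$ for all $n\ge0$. Equivalently, the function $S(\lambda)=I-\int_{\mathbb R}\frac{1}{\lambda-i\mu}\,d\bar\rho(\mu)\,\sigma_1$ has $n$-th moments $H^S_n:=\int_{\mathbb R}(i\mu)^nd\bar\rho(\mu)$ equal to $H_n$.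
   Context: $\sigma_1$ denotes a fixed invertible self-adjoint $2\times2$ matrix (in the paper, $\sigma_1=\begin{pmatrix}0&1\\1&0\end{pmatrix}$). *)

theory Defs
  imports "HOL-Analysis.Analysis"
begin

definition finite_moments_borel :: "real measure \<Rightarrow> bool" where
  "finite_moments_borel M \<longleftrightarrow> sets M = sets borel \<and> (\<forall>n::nat. integrable M (\<lambda>x. x ^ n))"

text \<open>A real signed Borel measure, represented as a difference (fst minus snd) of two
  positive Borel measures.\<close>
type_synonym signed_measure = "real measure \<times> real measure"

definition signed_fm :: "signed_measure \<Rightarrow> bool" where
  "signed_fm \<rho> \<longleftrightarrow> finite_moments_borel (fst \<rho>) \<and> finite_moments_borel (snd \<rho>)"

definition sint :: "signed_measure \<Rightarrow> (real \<Rightarrow> complex) \<Rightarrow> complex" where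
  "sint \<rho> f = integral\<^sup>L (fst \<rho>) f - integral\<^sup>L (snd \<rho>) f"

definition matrix_moment ::
  "signed_measure \<Rightarrow> signed_measure \<Rightarrow> signed_measure \<Rightarrow> nat \<Rightarrow> complex^2^2" where
  "matrix_moment \<rho>11 \<rho>12 \<rho>22 n =
     (let f = (\<lambda>\<mu>::real. (\<i> * complex_of_real \<mu>) ^ n) in
      (\<chi> j k. if j = 1 \<and> k = 1 then sint \<rho>11 f
              else if j = 1 \<and> k = 2 then \<i> * sint \<rho>12 f
              else if j = 2 \<and> k = 1 then - \<i> * sint \<rho>12 f
              else sint \<rho>22 f))"

definition H_mat :: "(nat \<Rightarrow> real) \<Rightarrow> (nat \<Rightarrow> real) \<Rightarrow> (nat \<Rightarrow> real) \<Rightarrow> nat \<Rightarrow> complex^2^2" where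
  "H_mat r b d n =
     (\<chi> j k. \<i> ^ n * (if j = 1 \<and> k = 1 then complex_of_real (r n)
              else if j = 1 \<and> k = 2 then \<i> * complex_of_real (b n)
              else if j = 2 \<and> k = 1 then - \<i> * complex_of_real (b n)
              else complex_of_real (d n)))"

end

theory Submission
  imports Defs
begin


definition dmeas :: "('a \<Rightarrow> real) \<Rightarrow> ('a \<Rightarrow> real) \<Rightarrow> 'a set \<Rightarrow> real measure" where
  "dmeas c p S = distr (density (count_space S) (\<lambda>k. ennreal (c k))) borel p"

lemma dmeas_sets: "sets (dmeas c p S) = sets borel"
  by (simp add: dmeas_def)

lemma dmeas_int:
  assumes nn: "\<And>k. k \<in> S \<Longrightarrow> 0 \<le> c k" and gm: "g \<in> borel_measurable borel"
  shows "integrable (dmeas c p S) (g :: real \<Rightarrow> real) \<longleftrightarrow> integrable (count_space S) (\<lambda>k. c k * g (p k))"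
    and "integral\<^sup>L (dmeas c p S) g = integral\<^sup>L (count_space S) (\<lambda>k. c k * g (p k))"
proof -
  have m: "p \<in> measurable (density (count_space S) (\<lambda>k. ennreal (c k))) borel" by simp
  show "integrable (dmeas c p S) (g :: real \<Rightarrow> real) \<longleftrightarrow> integrable (count_space S) (\<lambda>k. c k * g (p k))"
    unfolding dmeas_def
    apply (subst integrable_distr_eq[OF m gm])
    apply (subst integrable_density)
    using nn by (auto simp: AE_count_space)
  show "integral\<^sup>L (dmeas c p S) g = integral\<^sup>L (count_space S) (\<lambda>k. c k * g (p k))"
    unfolding dmeas_def
    apply (subst integral_distr[OF m gm])
    apply (subst integral_density)
    using nn by (auto simp: AE_count_space)
qed


definition mom :: "(real \<times> real) list \<Rightarrow> nat \<Rightarrow> real" where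
  "mom L j = (\<Sum>(w,x)\<leftarrow>L. w * x ^ j)"
definition amom :: "(real \<times> real) list \<Rightarrow> nat \<Rightarrow> real" where
  "amom L j = (\<Sum>(w,x)\<leftarrow>L. \<bar>w\<bar> * \<bar>x\<bar> ^ j)"
definition Dop :: "(real \<times> real) list \<Rightarrow> (real \<times> real) list" where
  "Dop L = map (\<lambda>(w,x). (w, x + 1)) L @ map (\<lambda>(w,x). (- w, x)) L"
primrec Bl :: "nat \<Rightarrow> (real \<times> real) list" where
  "Bl 0 = [(1,0)]" | "Bl (Suc n) = Dop (Bl n)"

lemma amom_nonneg: "0 \<le> amom L j"
  unfolding amom_def by (induction L) auto

lemma shift_mom: "(\<Sum>(w,x)\<leftarrow>L. w * (x + 1) ^ j) = (\<Sum>i\<le>j. of_nat (j choose i) * mom L i)"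
proof (induction L)
  case Nil then show ?case by (simp add: mom_def)
next
  case (Cons a L)
  obtain w x where a: "a = (w,x)" by fastforce
  have "w * (x + 1) ^ j = (\<Sum>i\<le>j. of_nat (j choose i) * (w * x ^ i))"
    by (subst binomial_ring[of x 1 j]) (simp add: sum_distrib_left algebra_simps)
  then show ?case using Cons by (simp add: a mom_def sum.distrib algebra_simps)
qed

lemma mom_idx: "mom L j = (\<Sum>i<length L. fst (L ! i) * snd (L ! i) ^ j)"
  unfolding mom_def by (simp add: sum_list_sum_nth atLeast0LessThan case_prod_beta)

lemma amom_idx: "amom L j = (\<Sum>i<length L. \<bar>fst (L ! i)\<bar> * \<bar>snd (L ! i)\<bar> ^ j)"
  unfolding amom_def by (simp add: sum_list_sum_nth atLeast0LessThan case_prod_beta)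

lemma mom_D: "mom (Dop L) j = (\<Sum>i<j. of_nat (j choose i) * mom L i)"
proof -
  have 1: "mom (Dop L) j = (\<Sum>(w,x)\<leftarrow>L. w * (x + 1) ^ j) - mom L j"
    unfolding Dop_def mom_def by (induction L) (auto simp: algebra_simps)
  show ?thesis unfolding 1 shift_mom by (simp add: lessThan_Suc_atMost[symmetric])
qed

lemma mom_B: "mom (Bl n) n = fact n \<and> (\<forall>j<n. mom (Bl n) j = 0)"
proof (induction n)
  case 0 then show ?case by (simp add: mom_def)
next
  case (Suc n)
  have z: "\<And>j. j < Suc n \<Longrightarrow> mom (Bl (Suc n)) j = 0"
    using Suc by (auto simp: mom_D intro!: sum.neutral)
  have "mom (Bl (Suc n)) (Suc n) = of_nat (Suc n choose n) * mom (Bl n) n"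
    using Suc by (simp add: mom_D lessThan_Suc)
  then show ?case using Suc z by (simp add: algebra_simps)
qed

definition Cn :: "nat \<Rightarrow> real" where "Cn n = (\<Sum>j<n. amom (Bl n) j)"

definition step :: "(nat \<Rightarrow> real) \<Rightarrow> (nat \<Rightarrow> real \<times> real) \<Rightarrow> nat \<Rightarrow> real \<times> real" where
  "step s f n = (let a = (s n - (\<Sum>m<n. fst (f m) * snd (f m) ^ n / snd (f m) ^ m * mom (Bl m) n)) / mom (Bl n) n
     in (a, 2 ^ n * (\<bar>a\<bar> + 1) * (Cn n + 1)))"

primrec Fr :: "(nat \<Rightarrow> real) \<Rightarrow> nat \<Rightarrow> (nat \<Rightarrow> real \<times> real)" where
  "Fr s 0 = (\<lambda>_. (0, 1))" | "Fr s (Suc n) = (Fr s n)(n := step s (Fr s n) n)"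

definition Gr :: "(nat \<Rightarrow> real) \<Rightarrow> nat \<Rightarrow> real \<times> real" where "Gr s n = Fr s (Suc n) n"

lemma step_cong: assumes "\<And>m. m < n \<Longrightarrow> f m = g m" shows "step s f n = step s g n"
proof -
  have "(\<Sum>m<n. fst (f m) * snd (f m) ^ n / snd (f m) ^ m * mom (Bl m) n)
      = (\<Sum>m<n. fst (g m) * snd (g m) ^ n / snd (g m) ^ m * mom (Bl m) n)"
    using assms by (intro sum.cong) auto
  then show ?thesis unfolding step_def by simp
qed

lemma Fr_stable: "m < k \<Longrightarrow> Fr s k m = Gr s m"
proof (induction k)
  case 0 then show ?case by simp
next
  case (Suc k)
  then show ?case by (cases "m = k") (auto simp: Gr_def)
qed

lemma Gr_step: "Gr s n = step s (Gr s) n"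
proof -
  have "Gr s n = step s (Fr s n) n" by (simp add: Gr_def)
  also have "\<dots> = step s (Gr s) n" by (rule step_cong) (simp add: Fr_stable)
  finally show ?thesis .
qed

definition "Aa s n = fst (Gr s n)"
definition "Tt s n = snd (Gr s n)"

lemma Cn_nonneg: "0 \<le> Cn n" unfolding Cn_def by (simp add: sum_nonneg amom_nonneg)

lemma Tt_def2: "Tt s n = 2 ^ n * (\<bar>Aa s n\<bar> + 1) * (Cn n + 1)"
  unfolding Tt_def Aa_def by (subst (1 2) Gr_step) (simp add: step_def Let_def)

lemma Tt_ge1: "1 \<le> Tt s n"
proof -
  have "1 * 1 * 1 \<le> (2::real) ^ n * (\<bar>Aa s n\<bar> + 1) * (Cn n + 1)"
    by (intro mult_mono) (auto simp: Cn_nonneg)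
  then show ?thesis by (simp add: Tt_def2)
qed

lemma Aa_eq: "(\<Sum>m\<le>n. Aa s m * Tt s m ^ n / Tt s m ^ m * mom (Bl m) n) = s n"
proof -
  have fn: "mom (Bl n) n \<noteq> 0" using mom_B[of n] by simp
  have Tn: "Tt s n \<noteq> 0" using Tt_ge1[of s n] by auto
  have "Aa s n = (s n - (\<Sum>m<n. Aa s m * Tt s m ^ n / Tt s m ^ m * mom (Bl m) n)) / mom (Bl n) n"
    unfolding Aa_def Tt_def by (subst Gr_step) (simp add: step_def Let_def)
  then show ?thesis using fn Tn by (simp add: lessThan_Suc_atMost[symmetric] field_simps)
qed


definition "Sg = Sigma (UNIV::nat set) (\<lambda>n. {..<length (Bl n)})"
definition "cc s k = Aa s (fst k) / Tt s (fst k) ^ (fst k) * fst (Bl (fst k) ! snd k)"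
definition "pp s k = Tt s (fst k) * snd (Bl (fst k) ! snd k)"

lemma Tt_pos: "0 < Tt s n" using Tt_ge1[of s n] by linarith

lemma block: "(\<Sum>i<length (Bl n). cc s (n,i) * pp s (n,i) ^ j) = Aa s n * Tt s n ^ j / Tt s n ^ n * mom (Bl n) j"
  unfolding mom_idx cc_def pp_def by (simp add: sum_distrib_left power_mult_distrib algebra_simps)

lemma ablock: "(\<Sum>i<length (Bl n). norm (cc s (n,i) * pp s (n,i) ^ j)) = \<bar>Aa s n\<bar> * Tt s n ^ j / Tt s n ^ n * amom (Bl n) j"
  using Tt_pos[of s n]
  unfolding amom_idx cc_def pp_def by (simp add: sum_distrib_left power_mult_distrib abs_mult power_abs algebra_simps)


lemma a1: fixes T :: real assumes T1: "1 \<le> T" and "j < n" shows "T ^ j / T ^ n \<le> 1 / T"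
proof -
  have Tj: "0 \<le> T ^ j" using T1 by simp
  have Tp: "0 < T ^ n" using T1 by simp
  have e: "T ^ n = T ^ j * T ^ (n - j)" using assms by (simp add: power_add[symmetric])
  have "T ^ 1 \<le> T ^ (n - j)" using T1 assms by (intro power_increasing) auto
  hence "T ^ j * T \<le> T ^ j * T ^ (n - j)" by (intro mult_left_mono[OF _ Tj]) simp
  hence le: "T ^ j * T \<le> T ^ n" by (simp only: e)
  have T0: "0 < T" using T1 by simp
  have "T ^ j \<le> T ^ n / T" by (subst pos_le_divide_eq[OF T0]) (rule le)
  hence "T ^ j / T ^ n \<le> (T ^ n / T) / T ^ n" by (rule divide_right_mono) (rule less_imp_le[OF Tp])
  also have "\<dots> = 1 / T" using Tp by simp
  finally show ?thesis .
qed

lemma a2: fixes X Y :: real assumes "1 \<le> X" "1 \<le> Y" shows "X * (1 / (2 ^ n * X * Y)) * Y = (1/2) ^ n"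
proof -
  have "X \<noteq> 0" "Y \<noteq> 0" using assms by auto
  then have "X * (1 / (2 ^ n * X * Y)) * Y = 1 / 2 ^ n" by simp
  then show ?thesis by (simp add: power_one_over)
qed

lemma ablock_bound:
  assumes "j < n"
  shows "\<bar>Aa s n\<bar> * Tt s n ^ j / Tt s n ^ n * amom (Bl n) j \<le> (1/2) ^ n"
proof -
  define T where "T = Tt s n"
  have T1: "1 \<le> T" using Tt_ge1 T_def by simp
  have am: "amom (Bl n) j \<le> Cn n" unfolding Cn_def
    using assms by (intro member_le_sum) (auto simp: amom_nonneg)
  have q: "T ^ j / T ^ n \<le> 1 / T" by (rule a1[OF T1 assms])
  have "\<bar>Aa s n\<bar> * (T ^ j / T ^ n) * amom (Bl n) j \<le> (\<bar>Aa s n\<bar> + 1) * (1 / T) * (Cn n + 1)"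
    using q am T1 by (intro mult_mono) (auto simp: amom_nonneg Cn_nonneg)
  also have "\<dots> = (1/2) ^ n" unfolding T_def Tt_def2
    by (rule a2) (auto simp: Cn_nonneg)
  finally show ?thesis unfolding T_def by (simp add: mult.assoc)
qed

lemma asum: "summable (\<lambda>n. \<bar>Aa s n\<bar> * Tt s n ^ j / Tt s n ^ n * amom (Bl n) j)"
proof (rule summable_comparison_test'[where N="Suc j"])
  show "summable (\<lambda>n. (1/2::real) ^ n)" by simp
  fix n assume "Suc j \<le> n"
  then show "norm (\<bar>Aa s n\<bar> * Tt s n ^ j / Tt s n ^ n * amom (Bl n) j) \<le> (1/2) ^ n"
  proof -
    have nn: "0 \<le> \<bar>Aa s n\<bar> * Tt s n ^ j / Tt s n ^ n * amom (Bl n) j"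
      using Tt_pos[of s n] amom_nonneg[of "Bl n" j] by simp
    have "j < n" using \<open>Suc j \<le> n\<close> by simp
    then show ?thesis unfolding real_norm_def abs_of_nonneg[OF nn] by (rule ablock_bound)
  qed
qed

lemma Sg_count: "countable (UNIV::nat set)" by simp

lemma int_S: "integrable (count_space Sg) (\<lambda>k. cc s k * pp s k ^ j)"
proof -
  have "Infinite_Set_Sum.abs_summable_on (\<lambda>k. cc s k * pp s k ^ j) Sg"
    unfolding Sg_def
  proof (subst Infinite_Set_Sum.abs_summable_on_Sigma_iff, simp, simp, intro conjI ballI)
    have e: "norm (infsetsum (\<lambda>i. norm (cc s (n,i) * pp s (n,i) ^ j)) {..<length (Bl n)})
        = \<bar>Aa s n\<bar> * Tt s n ^ j / Tt s n ^ n * amom (Bl n) j" for n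
    proof -
      have h: "infsetsum (\<lambda>i. norm (cc s (n,i) * pp s (n,i) ^ j)) {..<length (Bl n)}
          = \<bar>Aa s n\<bar> * Tt s n ^ j / Tt s n ^ n * amom (Bl n) j"
        by (simp only: infsetsum_finite[OF finite_lessThan] ablock)
      have nn: "0 \<le> \<bar>Aa s n\<bar> * Tt s n ^ j / Tt s n ^ n * amom (Bl n) j"
        using Tt_pos[of s n] amom_nonneg[of "Bl n" j] by simp
      show ?thesis by (subst h) (simp only: real_norm_def abs_of_nonneg[OF nn])
    qed
    show "Infinite_Set_Sum.abs_summable_on (\<lambda>n. infsetsum (\<lambda>i. norm (cc s (n,i) * pp s (n,i) ^ j)) {..<length (Bl n)}) UNIV"
      unfolding Infinite_Set_Sum.abs_summable_on_nat_iff' e by (rule asum)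
  qed simp
  then show ?thesis by (simp add: Infinite_Set_Sum.abs_summable_on_def)
qed

lemma val_S: "integral\<^sup>L (count_space Sg) (\<lambda>k. cc s k * pp s k ^ j) = s j"
proof -
  have i: "Infinite_Set_Sum.abs_summable_on (\<lambda>k. cc s k * pp s k ^ j) Sg" using int_S by (simp add: Infinite_Set_Sum.abs_summable_on_def)
  have "integral\<^sup>L (count_space Sg) (\<lambda>k. cc s k * pp s k ^ j) = infsetsum (\<lambda>k. cc s k * pp s k ^ j) Sg"
    by (simp add: infsetsum_def)
  also have "\<dots> = infsetsum (\<lambda>n. infsetsum (\<lambda>i. cc s (n,i) * pp s (n,i) ^ j) {..<length (Bl n)}) UNIV"
    using i unfolding Sg_def by (subst infsetsum_Sigma) auto
  also have "\<dots> = infsetsum (\<lambda>n. Aa s n * Tt s n ^ j / Tt s n ^ n * mom (Bl n) j) UNIV"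
    by (simp add: block)
  also have "\<dots> = (\<Sum>n. Aa s n * Tt s n ^ j / Tt s n ^ n * mom (Bl n) j)"
  proof (rule infsetsum_nat')
    show "Infinite_Set_Sum.abs_summable_on (\<lambda>n. Aa s n * Tt s n ^ j / Tt s n ^ n * mom (Bl n) j) UNIV"
      unfolding Infinite_Set_Sum.abs_summable_on_nat_iff'
    proof (rule summable_comparison_test[OF _ asum[of s j]], intro exI allI impI)
      fix n :: nat
      have "norm (Aa s n * Tt s n ^ j / Tt s n ^ n * mom (Bl n) j)
          = norm (\<Sum>i<length (Bl n). cc s (n,i) * pp s (n,i) ^ j)" by (simp add: block)
      also have "\<dots> \<le> (\<Sum>i<length (Bl n). norm (cc s (n,i) * pp s (n,i) ^ j))" by (rule norm_sum)
      also have "\<dots> = \<bar>Aa s n\<bar> * Tt s n ^ j / Tt s n ^ n * amom (Bl n) j" by (rule ablock)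
      finally show "norm (norm (Aa s n * Tt s n ^ j / Tt s n ^ n * mom (Bl n) j))
          \<le> \<bar>Aa s n\<bar> * Tt s n ^ j / Tt s n ^ n * amom (Bl n) j" by simp
    qed
  qed
  also have "\<dots> = (\<Sum>n\<le>j. Aa s n * Tt s n ^ j / Tt s n ^ n * mom (Bl n) j)"
    by (rule suminf_finite) (use mom_B in auto)
  also have "\<dots> = s j" by (rule Aa_eq)
  finally show ?thesis .
qed

lemma key:
  fixes s :: "nat \<Rightarrow> real"
  shows "\<exists>\<mu>p \<mu>m. finite_moments_borel \<mu>p \<and> finite_moments_borel \<mu>m \<and>
     (\<forall>j. integral\<^sup>L \<mu>p (\<lambda>x. x ^ j) - integral\<^sup>L \<mu>m (\<lambda>x. x ^ j) = s j)"
proof -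
  define cp where "cp k = max (cc s k) 0" for k
  define cm where "cm k = max (- cc s k) 0" for k
  have ip: "integrable (count_space Sg) (\<lambda>k. cp k * pp s k ^ j)" for j
    by (rule Bochner_Integration.integrable_bound[OF int_S[of s j]]) (auto simp: cp_def abs_mult intro!: AE_I2 mult_right_mono)
  have im: "integrable (count_space Sg) (\<lambda>k. cm k * pp s k ^ j)" for j
    by (rule Bochner_Integration.integrable_bound[OF int_S[of s j]]) (auto simp: cm_def abs_mult intro!: AE_I2 mult_right_mono)
  have g: "(\<lambda>x::real. x ^ j) \<in> borel_measurable borel" for j by simp
  have cpn: "\<And>k. 0 \<le> cp k" and cmn: "\<And>k. 0 \<le> cm k" by (auto simp: cp_def cm_def)
  show ?thesis
  proof (intro exI conjI allI)
    show "finite_moments_borel (dmeas cp (pp s) Sg)"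
      unfolding finite_moments_borel_def dmeas_sets
    proof (intro conjI allI refl)
      fix n
      show "integrable (dmeas cp (pp s) Sg) (\<lambda>x. x ^ n)"
        using dmeas_int(1)[where c=cp and S=Sg and p="pp s" and g="\<lambda>x. x ^ n"] cpn ip[of n] by simp
    qed
    show "finite_moments_borel (dmeas cm (pp s) Sg)"
      unfolding finite_moments_borel_def dmeas_sets
    proof (intro conjI allI refl)
      fix n
      show "integrable (dmeas cm (pp s) Sg) (\<lambda>x. x ^ n)"
        using dmeas_int(1)[where c=cm and S=Sg and p="pp s" and g="\<lambda>x. x ^ n"] cmn im[of n] by simp
    qed
    fix j
    have "integral\<^sup>L (dmeas cp (pp s) Sg) (\<lambda>x. x ^ j) - integral\<^sup>L (dmeas cm (pp s) Sg) (\<lambda>x. x ^ j)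
      = integral\<^sup>L (count_space Sg) (\<lambda>k. cp k * pp s k ^ j) - integral\<^sup>L (count_space Sg) (\<lambda>k. cm k * pp s k ^ j)"
      using dmeas_int(2)[where c=cp and S=Sg and p="pp s" and g="\<lambda>x. x ^ j"]
        dmeas_int(2)[where c=cm and S=Sg and p="pp s" and g="\<lambda>x. x ^ j"] cpn cmn by simp
    also have "\<dots> = integral\<^sup>L (count_space Sg) (\<lambda>k. cp k * pp s k ^ j - cm k * pp s k ^ j)"
      by (rule Bochner_Integration.integral_diff[OF ip im, symmetric])
    also have "\<dots> = integral\<^sup>L (count_space Sg) (\<lambda>k. cc s k * pp s k ^ j)"
      by (rule Bochner_Integration.integral_cong) (auto simp: cp_def cm_def max_def algebra_simps)
    also have "\<dots> = s j" by (rule val_S)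
    finally show "integral\<^sup>L (dmeas cp (pp s) Sg) (\<lambda>x. x ^ j) - integral\<^sup>L (dmeas cm (pp s) Sg) (\<lambda>x. x ^ j) = s j" .
  qed
qed

lemma sint_mom:
  "sint (\<mu>p, \<mu>m) (\<lambda>\<mu>::real. (\<i> * complex_of_real \<mu>) ^ n)
     = \<i> ^ n * complex_of_real (integral\<^sup>L \<mu>p (\<lambda>x. x ^ n) - integral\<^sup>L \<mu>m (\<lambda>x. x ^ n))"
proof -
  have e: "(\<lambda>\<mu>::real. (\<i> * complex_of_real \<mu>) ^ n) = (\<lambda>\<mu>. \<i> ^ n * complex_of_real (\<mu> ^ n))"
    by (simp add: power_mult_distrib)
  show ?thesis unfolding sint_def e integral_mult_right_zero integral_complex_of_real
    by (simp add: algebra_simps)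
qed

theorem mainTheorem11:
  fixes r b d :: "nat \<Rightarrow> real"
  shows "\<exists>\<rho>11 \<rho>12 \<rho>22. signed_fm \<rho>11 \<and> signed_fm \<rho>12 \<and> signed_fm \<rho>22 \<and>
           (\<forall>n. matrix_moment \<rho>11 \<rho>12 \<rho>22 n = H_mat r b d n)"
proof -
  obtain p1 m1 where 1: "finite_moments_borel p1" "finite_moments_borel m1"
    "\<And>j. integral\<^sup>L p1 (\<lambda>x. x ^ j) - integral\<^sup>L m1 (\<lambda>x. x ^ j) = r j"
    using key[of r] by blast
  obtain p2 m2 where 2: "finite_moments_borel p2" "finite_moments_borel m2"
    "\<And>j. integral\<^sup>L p2 (\<lambda>x. x ^ j) - integral\<^sup>L m2 (\<lambda>x. x ^ j) = b j"
    using key[of b] by blast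
  obtain p3 m3 where 3: "finite_moments_borel p3" "finite_moments_borel m3"
    "\<And>j. integral\<^sup>L p3 (\<lambda>x. x ^ j) - integral\<^sup>L m3 (\<lambda>x. x ^ j) = d j"
    using key[of d] by blast
  show ?thesis
  proof (intro exI conjI allI)
    show "signed_fm (p1, m1)" "signed_fm (p2, m2)" "signed_fm (p3, m3)"
      using 1 2 3 by (auto simp: signed_fm_def)
    fix n
    show "matrix_moment (p1, m1) (p2, m2) (p3, m3) n = H_mat r b d n"
      unfolding matrix_moment_def H_mat_def Let_def sint_mom 1(3) 2(3) 3(3)
      by (simp add: vec_eq_iff forall_2 algebra_simps)
  qed
qed

end
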